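(* For $z=x+iy\in\mathbb{C}$ (with $x,y\in\mathbb{R}$) put $$A(z)=1-y,\qquad B(z)=x^2+y^2-y,\qquad C(z)=y,$$ and $\delta(z)=\delta\big(A(z),B(z),C(z)\big)$, where $\delta$ is the Apollonian depth function on real triples. Consider the maps $$F(x,y)=(x,\,1-y),\qquad S(x,y)=\Big(\tfrac{x}{x^2+y^2},\,\tfrac{y}{x^2+y^2}\Big)\ \ ((x,y)\neq(0,0)),$$ $$R(x,y)=\Big(\tfrac{x}{x^2+(y-1)^2},\,\tfrac{x^2+y^2-y}{x^2+(y-1)^2}\Big)\ \ ((x,y)\neq(0,1)),$$ i.e. $F$ is the reflection in the line $y=1/2$, $S$ is the inversion in the circle $x^2+y^2=1$, and $R$ is the inversion in the circle $x^2+(y-1)^2=1$. Then, for every $z$ in the domain of the respective map, there is a real number $\lambda>0$ (depending on the map and on $z$) such that $$\big(A(Fz),B(Fz),C(Fz)\big)=\big(C(z),B(z),A(z)\big),$$ $$\big(A(Sz),B(Sz),C(Sz)\big)=\lambda\big(B(z),A(z),C(z)\big),$$ $$\big(A(Rz),B(Rz),C(Rz)\big)=\lambda\big(A(z),C(z),B(z)\big),$$ i.e. $F$ interchanges $C$ and $A$, $S$ interchanges $A$ and $B$, and $R$ interchanges $B$ and $C$, up to a common positive rescaling of the three values. Moreover $\delta(Fz)=\delta(z)$, $\delta(Sz)=\delta(z)$ and $\delta(Rz)=\delta(z)$.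
   Context: The Apollonian depth function $\delta:\mathbb{R}^3\to\mathbb{N}\cup\{\infty\}$ is defined as follows. If any of $a,b,c$ is $\le 0$, then $\delta(a,b,c)=0$. Otherwise one performs a process: one step replaces the greatest entry of the current triple by $a+b+c-2\sqrt{ab+bc+ca}$ (where $a,b,c$ are the current entries). The step is repeated until the newly produced number is negative or $0$; $\delta(a,b,c)$ is the number of steps performed (counting the step that produces the non-positive number), and $\delta(a,b,c)=\infty$ if this never happens. For example $(179,62,23)\to(62,23,6)\to(23,6,3)\to(3,2,-1)$, so $\delta(179,62,23)=3$. Geometrically, $A(z),B(z),C(z)$ are (up to a common positive scale) the signed curvatures of the three mutually tangent disks of a tricycle whose two tangency spinors, normalized, are $(1,0)$ and $(x,y)$. *)

theory Defs
  imports Complex_Main "HOL-Library.Extended_Nat"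
begin

definition apo_step :: "real \<times> real \<times> real \<Rightarrow> real \<times> real \<times> real" where
  "apo_step t = (case t of (a, b, c) \<Rightarrow>
     (let d = a + b + c - 2 * sqrt (a*b + b*c + c*a) in
      if b \<le> a \<and> c \<le> a then (d, b, c)
      else if c \<le> b then (a, d, c)
      else (a, b, d)))"

definition nonpos_triple :: "real \<times> real \<times> real \<Rightarrow> bool" where
  "nonpos_triple t = (case t of (a, b, c) \<Rightarrow> a \<le> 0 \<or> b \<le> 0 \<or> c \<le> 0)"

definition apo_depth :: "real \<Rightarrow> real \<Rightarrow> real \<Rightarrow> enat" where
  "apo_depth a b c =
     (if \<exists>n. nonpos_triple ((apo_step ^^ n) (a, b, c))
      then enat (LEAST n. nonpos_triple ((apo_step ^^ n) (a, b, c)))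
      else \<infinity>)"

definition Af :: "complex \<Rightarrow> real" where "Af z = 1 - Im z"
definition Bf :: "complex \<Rightarrow> real" where "Bf z = (Re z)^2 + (Im z)^2 - Im z"
definition Cf :: "complex \<Rightarrow> real" where "Cf z = Im z"

definition depth_z :: "complex \<Rightarrow> enat" where
  "depth_z z = apo_depth (Af z) (Bf z) (Cf z)"

definition Fmap :: "complex \<Rightarrow> complex" where
  "Fmap z = Complex (Re z) (1 - Im z)"

definition Smap :: "complex \<Rightarrow> complex" where
  "Smap z = Complex (Re z / ((Re z)^2 + (Im z)^2)) (Im z / ((Re z)^2 + (Im z)^2))"

definition Rmap :: "complex \<Rightarrow> complex" where
  "Rmap z = Complex (Re z / ((Re z)^2 + (Im z - 1)^2))
                    (((Re z)^2 + (Im z)^2 - Im z) / ((Re z)^2 + (Im z - 1)^2))"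

end

theory Submission imports Defs begin

definition sc :: "real \<Rightarrow> real\<times>real\<times>real \<Rightarrow> real\<times>real\<times>real" where
  "sc l t = (case t of (a,b,c) \<Rightarrow> (l*a,l*b,l*c))"

definition permr :: "real\<times>real\<times>real \<Rightarrow> real\<times>real\<times>real \<Rightarrow> bool" where
  "permr t s = (case t of (a,b,c) \<Rightarrow> s \<in> {(a,b,c),(a,c,b),(b,a,c),(b,c,a),(c,a,b),(c,b,a)})"

lemma step_sc: "l > 0 \<Longrightarrow> apo_step (sc l t) = sc l (apo_step t)"
proof -
  assume l: "l > 0"
  obtain a b c where t: "t = (a,b,c)" by (cases t) auto
  have e: "sqrt (l*a*(l*b) + l*b*(l*c) + l*c*(l*a)) = l * sqrt (a*b+b*c+c*a)"
  proof -
    have "l*a*(l*b) + l*b*(l*c) + l*c*(l*a) = l^2 * (a*b+b*c+c*a)" by (simp add: algebra_simps power2_eq_square)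
    then show ?thesis using l by (simp add: real_sqrt_mult)
  qed
  have e': "sqrt (a*(b*(l*l)) + (a*(c*(l*l)) + b*(c*(l*l)))) = l*sqrt(a*b+(a*c+b*c))"
    using e by (simp add: algebra_simps)
  show ?thesis using l unfolding t apo_step_def sc_def Let_def
    by (auto simp: algebra_simps e')
qed

lemma nonpos_sc: "l > 0 \<Longrightarrow> nonpos_triple (sc l t) = nonpos_triple t"
  by (cases t) (auto simp: sc_def nonpos_triple_def mult_le_0_iff)

lemma nonpos_perm: "permr t s \<Longrightarrow> nonpos_triple s = nonpos_triple t"
  by (cases t) (auto simp: permr_def nonpos_triple_def)

lemma sym3: "sqrt (b*a+a*c+c*b) = sqrt (a*b+b*c+c*a)" "sqrt (a*c+c*b+b*a) = sqrt (a*b+b*c+c*a)"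
  "sqrt (b*c+c*a+a*b) = sqrt (a*b+b*c+c*a)" "sqrt (c*a+a*b+b*c) = sqrt (a*b+b*c+c*a)"
  "sqrt (c*b+b*a+a*c) = sqrt (a*b+b*c+c*a)"
  by (simp_all add: algebra_simps)

lemma step_perm: "permr t s \<Longrightarrow> permr (apo_step t) (apo_step s)"
proof -
  assume p: "permr t s"
  obtain a b c where t: "t = (a,b,c)" by (cases t) auto
  define d where "d = a + b + c - 2 * sqrt (a*b+b*c+c*a)"
  have dd: "a + c + b - 2 * sqrt (a*c+c*b+b*a) = d"
    "b + a + c - 2 * sqrt (b*a+a*c+c*b) = d"
    "b + c + a - 2 * sqrt (b*c+c*a+a*b) = d" "c + a + b - 2 * sqrt (c*a+a*b+b*c) = d"
    "c + b + a - 2 * sqrt (c*b+b*a+a*c) = d" "a + b + c - 2 * sqrt (a*b+b*c+c*a) = d"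
    unfolding d_def by (simp_all add: algebra_simps)
  from p have "s \<in> {(a,b,c),(a,c,b),(b,a,c),(b,c,a),(c,a,b),(c,b,a)}" unfolding t permr_def by simp
  then show ?thesis unfolding t permr_def
    by (elim insertE emptyE; simp only: apo_step_def Let_def prod.case dd; auto)
qed

lemma iter_rel: "l > 0 \<Longrightarrow> permr (sc l t) s \<Longrightarrow>
  \<exists>l'>0. permr (sc l' ((apo_step^^n) t)) ((apo_step^^n) s)"
proof (induction n)
  case 0 then show ?case by auto
next
  case (Suc n)
  then obtain l' where "l' > 0" "permr (sc l' ((apo_step^^n) t)) ((apo_step^^n) s)" by auto
  from this(2) have "permr (apo_step (sc l' ((apo_step^^n) t))) (apo_step ((apo_step^^n) s))"
    by (rule step_perm)
  then show ?case using \<open>l' > 0\<close> by (auto simp: step_sc)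
qed

lemma depth_rel:
  assumes "l > 0" "permr (sc l (a,b,c)) (a',b',c')"
  shows "apo_depth a' b' c' = apo_depth a b c"
proof -
  have "\<And>n. nonpos_triple ((apo_step^^n) (a',b',c')) = nonpos_triple ((apo_step^^n) (a,b,c))"
  proof -
    fix n
    obtain l' where "l' > 0" "permr (sc l' ((apo_step^^n) (a,b,c))) ((apo_step^^n) (a',b',c'))"
      using iter_rel[OF assms] by blast
    then show "?thesis n" using nonpos_perm nonpos_sc by metis
  qed
  then show ?thesis unfolding apo_depth_def by simp
qed

lemma depth_scale:
  assumes "l > 0" "permr (sc l (Af z, Bf z, Cf z)) (Af w, Bf w, Cf w)"
  shows "depth_z w = depth_z z"
  unfolding depth_z_def using depth_rel[OF assms] .

theorem proposition2:
  fixes z :: complex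
  shows "(Af (Fmap z) = Cf z \<and> Bf (Fmap z) = Bf z \<and> Cf (Fmap z) = Af z
           \<and> depth_z (Fmap z) = depth_z z)
       \<and> (z \<noteq> 0 \<longrightarrow>
           (\<exists>l::real. l > 0 \<and> Af (Smap z) = l * Bf z \<and> Bf (Smap z) = l * Af z
                 \<and> Cf (Smap z) = l * Cf z)
           \<and> depth_z (Smap z) = depth_z z)
       \<and> (z \<noteq> \<i> \<longrightarrow>
           (\<exists>l::real. l > 0 \<and> Af (Rmap z) = l * Af z \<and> Bf (Rmap z) = l * Cf z
                 \<and> Cf (Rmap z) = l * Bf z)
           \<and> depth_z (Rmap z) = depth_z z)"
proof -
  let ?x = "Re z" and ?y = "Im z"
  have F1: "Af (Fmap z) = Cf z \<and> Bf (Fmap z) = Bf z \<and> Cf (Fmap z) = Af z"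
    by (simp add: Af_def Bf_def Cf_def Fmap_def algebra_simps power2_eq_square)
  have F2: "depth_z (Fmap z) = depth_z z"
    by (rule depth_scale[of 1]) (use F1 in \<open>auto simp: sc_def permr_def\<close>)
  have S: "\<exists>l::real. l > 0 \<and> Af (Smap z) = l * Bf z \<and> Bf (Smap z) = l * Af z
                 \<and> Cf (Smap z) = l * Cf z" if "z \<noteq> 0"
  proof -
    define r where "r = ?x^2 + ?y^2"
    have r: "r > 0" using that unfolding r_def
      by (metis complex_eq_iff sum_power2_gt_zero_iff zero_complex.sel(1) zero_complex.sel(2))
    have a1: "Af (Smap z) = (1/r) * Bf z"
    proof -
      have b: "Bf z = r - ?y" unfolding Bf_def r_def by simp
      have "Af (Smap z) = 1 - ?y/r" unfolding Af_def Smap_def r_def by simp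
      also have "\<dots> = (1/r) * (r - ?y)" using r by (simp add: field_simps)
      finally show ?thesis using b by simp
    qed
    have a2: "Bf (Smap z) = (1/r) * Af z"
    proof -
      have "Bf (Smap z) = (?x^2 + ?y^2)/r^2 - ?y/r"
        unfolding Bf_def Smap_def r_def by (simp add: power_divide add_divide_distrib)
      also have "\<dots> = r/r^2 - ?y/r" by (simp add: r_def)
      also have "\<dots> = 1/r - ?y/r" using r by (simp add: power2_eq_square)
      also have "\<dots> = (1/r) * (1 - ?y)" by (simp add: diff_divide_distrib)
      finally show ?thesis unfolding Af_def .
    qed
    have a3: "Cf (Smap z) = (1/r) * Cf z" unfolding Cf_def Smap_def r_def by simp
    have "Af (Smap z) = (1/r) * Bf z \<and> Bf (Smap z) = (1/r) * Af z \<and> Cf (Smap z) = (1/r) * Cf z"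
      using a1 a2 a3 by blast
    then show ?thesis using r by (intro exI[of _ "1/r"]) auto
  qed
  have R: "\<exists>l::real. l > 0 \<and> Af (Rmap z) = l * Af z \<and> Bf (Rmap z) = l * Cf z
                 \<and> Cf (Rmap z) = l * Bf z" if "z \<noteq> \<i>"
  proof -
    define q where "q = ?x^2 + (?y - 1)^2"
    have q: "q > 0" using that unfolding q_def
      by (metis complex_eq_iff sum_power2_gt_zero_iff right_minus_eq imaginary_unit.sel(1) imaginary_unit.sel(2))
    define b where "b = ?x^2 + ?y^2 - ?y"
    have bq: "q = b - ?y + 1" unfolding q_def b_def by (simp add: power2_eq_square algebra_simps)
    have poly: "?x^2 + b^2 - b*q = ?y * q" unfolding bq b_def by (simp add: power2_eq_square algebra_simps)
    have r1: "Af (Rmap z) = (1/q) * Af z"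
    proof -
      have "Af (Rmap z) = 1 - b/q" unfolding Af_def Rmap_def q_def b_def by simp
      also have "\<dots> = (q - b)/q" using q by (simp add: field_simps)
      also have "\<dots> = (1/q) * (1 - ?y)" unfolding bq by simp
      finally show ?thesis unfolding Af_def .
    qed
    have r2: "Bf (Rmap z) = (1/q) * Cf z"
    proof -
      have "Bf (Rmap z) = (?x/q)^2 + (b/q)^2 - b/q" unfolding Bf_def Rmap_def q_def b_def by simp
      also have "\<dots> = (?x^2 + b^2 - b*q)/q^2" using q by (simp add: field_simps power2_eq_square)
      also have "\<dots> = (1/q) * ?y" unfolding poly using q by (simp add: power2_eq_square)
      finally show ?thesis unfolding Cf_def .
    qed
    have r3: "Cf (Rmap z) = (1/q) * Bf z" unfolding Cf_def Rmap_def Bf_def q_def by simp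
    have "Af (Rmap z) = (1/q) * Af z \<and> Bf (Rmap z) = (1/q) * Cf z \<and> Cf (Rmap z) = (1/q) * Bf z"
      using r1 r2 r3 by blast
    then show ?thesis using q by (intro exI[of _ "1/q"]) auto
  qed
  show ?thesis
  proof (intro conjI impI)
    show "Af (Fmap z) = Cf z" "Bf (Fmap z) = Bf z" "Cf (Fmap z) = Af z" using F1 by auto
    show "depth_z (Fmap z) = depth_z z" by (rule F2)
  next
    assume "z \<noteq> 0"
    with S obtain l where l: "l > 0" "Af (Smap z) = l * Bf z" "Bf (Smap z) = l * Af z"
                 "Cf (Smap z) = l * Cf z" by blast
    then show "\<exists>l::real. l > 0 \<and> Af (Smap z) = l * Bf z \<and> Bf (Smap z) = l * Af z
                 \<and> Cf (Smap z) = l * Cf z" by blast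
    show "depth_z (Smap z) = depth_z z"
      by (rule depth_scale[OF l(1)]) (use l in \<open>auto simp: sc_def permr_def\<close>)
  next
    assume "z \<noteq> \<i>"
    with R obtain l where l: "l > 0" "Af (Rmap z) = l * Af z" "Bf (Rmap z) = l * Cf z"
                 "Cf (Rmap z) = l * Bf z" by blast
    then show "\<exists>l::real. l > 0 \<and> Af (Rmap z) = l * Af z \<and> Bf (Rmap z) = l * Cf z
                 \<and> Cf (Rmap z) = l * Bf z" by blast
    show "depth_z (Rmap z) = depth_z z"
      by (rule depth_scale[OF l(1)]) (use l in \<open>auto simp: sc_def permr_def\<close>)
  qed
qed

end
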